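(* Let $S\subseteq\mathcal{S}_d$ be nonempty, $[d]$ partitioned into groups $G_1,\dots,G_g$, $\bar\alpha,\bar\beta\in[0,1]^g$, $k\in[d]$, and assume an $(\bar\alpha,\bar\beta)$-$k$-fair ranking in $\mathcal S_d$ exists. Let $\tau$ be an $(\bar\alpha,\bar\beta)$-$k$-fair top-$k$ ranking minimizing $2\sum_{\pi\in S}\sum_{i\in D_\tau}(\pi(i)-\tau(i))\mathbb{1}[\tau(i)<\pi(i)]$, and let $\sigma\in\mathcal S_d$ be a ranking with $\sigma(a)=\tau(a)$ for all $a\in D_\tau$ that minimizes $2\sum_{\pi\in S}\sum_{i\in[d]}(\pi(i)-\sigma(i))\mathbb{1}[\sigma(i)<\pi(i)]$ among all such extensions. Let $\sigma^*$ be any $(\bar\alpha,\bar\beta)$-$k$-fair ranking in $\mathcal S_d$ minimizing $\mathrm{Obj}$, let $\mathrm{OPT}=\mathrm{Obj}(\sigma^* )$, and let $L^*=\{a\in[d]:\sigma^*(a)\le k\}$. Then $\mathrm{Obj}(\sigma)\le\overleftarrow{\mathrm{Obj}}(\sigma^*_{L^*})+\mathrm{OPT}$.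
   Context: $\mathcal{S}_d$ is the set of rankings of $[d]$, $\pi(a)$ the rank of $a$. A top-$k$ ranking is a bijection $\tau:D_\tau\to[k]$, $D_\tau\subseteq[d]$. A full or top-$k$ ranking is $(\bar\alpha,\bar\beta)$-$k$-fair if for every $i\in[g]$ the candidates at positions $1,\dots,k$ include at least $\lfloor\alpha_i k\rfloor$ and at most $\lceil\beta_i k\rceil$ members of $G_i$. For $\pi,\sigma\in\mathcal S_d$, $F(\pi,\sigma)=\sum_{i\in[d]}|\pi(i)-\sigma(i)|$ and $\mathrm{Obj}(\sigma)=\sum_{\pi\in S}F(\pi,\sigma)$. For $\sigma\in\mathcal S_d$ and $D\subseteq[d]$, $\overleftarrow{\mathrm{Obj}}(\sigma_D):=2\sum_{\pi\in S}\sum_{i\in D}(\pi(i)-\sigma(i))\mathbb{1}[\sigma(i)<\pi(i)]$. *)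

theory Defs
  imports Complex_Main "HOL-Combinatorics.Permutations"
begin

text \<open>A (full) ranking of [d] = {1..d}: a bijection of {1..d}; pi a is the rank of a.
  We normalise to the identity outside {1..d}.\<close>
definition ranking :: "nat \<Rightarrow> (nat \<Rightarrow> nat) \<Rightarrow> bool" where
  "ranking d \<pi> \<longleftrightarrow> \<pi> permutes {1..d}"

definition topk_ranking :: "nat \<Rightarrow> nat \<Rightarrow> nat set \<Rightarrow> (nat \<Rightarrow> nat) \<Rightarrow> bool" where
  "topk_ranking d k D \<tau> \<longleftrightarrow> D \<subseteq> {1..d} \<and> bij_betw \<tau> D {1..k}"

definition is_partition :: "nat \<Rightarrow> nat \<Rightarrow> (nat \<Rightarrow> nat set) \<Rightarrow> bool" where
  "is_partition d g G \<longleftrightarrow>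
     (\<forall>i\<in>{1..g}. G i \<noteq> {}) \<and>
     (\<forall>i\<in>{1..g}. \<forall>j\<in>{1..g}. i \<noteq> j \<longrightarrow> G i \<inter> G j = {}) \<and>
     (\<Union>i\<in>{1..g}. G i) = {1..d}"

definition fair_full ::
  "nat \<Rightarrow> (nat \<Rightarrow> nat set) \<Rightarrow> (nat \<Rightarrow> real) \<Rightarrow> (nat \<Rightarrow> real) \<Rightarrow> nat \<Rightarrow> (nat \<Rightarrow> nat) \<Rightarrow> bool" where
  "fair_full g G \<alpha> \<beta> k \<sigma> \<longleftrightarrow>
     (\<forall>i\<in>{1..g}. \<lfloor>\<alpha> i * real k\<rfloor> \<le> int (card {a \<in> G i. \<sigma> a \<le> k}) \<and>
                 int (card {a \<in> G i. \<sigma> a \<le> k}) \<le> \<lceil>\<beta> i * real k\<rceil>)"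

definition fair_topk ::
  "nat \<Rightarrow> (nat \<Rightarrow> nat set) \<Rightarrow> (nat \<Rightarrow> real) \<Rightarrow> (nat \<Rightarrow> real) \<Rightarrow> nat \<Rightarrow> nat set \<Rightarrow> (nat \<Rightarrow> nat) \<Rightarrow> bool" where
  "fair_topk g G \<alpha> \<beta> k D \<tau> \<longleftrightarrow>
     (\<forall>i\<in>{1..g}. \<lfloor>\<alpha> i * real k\<rfloor> \<le> int (card {a \<in> G i \<inter> D. \<tau> a \<le> k}) \<and>
                 int (card {a \<in> G i \<inter> D. \<tau> a \<le> k}) \<le> \<lceil>\<beta> i * real k\<rceil>)"

definition footrule :: "nat \<Rightarrow> (nat \<Rightarrow> nat) \<Rightarrow> (nat \<Rightarrow> nat) \<Rightarrow> int" where
  "footrule d \<pi> \<sigma> = (\<Sum>i\<in>{1..d}. \<bar>int (\<pi> i) - int (\<sigma> i)\<bar>)"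

definition Obj :: "nat \<Rightarrow> (nat \<Rightarrow> nat) set \<Rightarrow> (nat \<Rightarrow> nat) \<Rightarrow> int" where
  "Obj d S \<sigma> = (\<Sum>\<pi>\<in>S. footrule d \<pi> \<sigma>)"

definition ObjL :: "(nat \<Rightarrow> nat) set \<Rightarrow> nat set \<Rightarrow> (nat \<Rightarrow> nat) \<Rightarrow> int" where
  "ObjL S D \<sigma> = 2 * (\<Sum>\<pi>\<in>S. \<Sum>i\<in>D.
      (int (\<pi> i) - int (\<sigma> i)) * (if \<sigma> i < \<pi> i then 1 else 0))"

end

theory Submission
  imports Defs
begin

lemma perm_sum_eq:
  assumes "p permutes {1..d::nat}"
  shows "(\<Sum>i\<in>{1..d}. int (p i)) = (\<Sum>i\<in>{1..d}. int i)"
proof -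
  have "(\<Sum>i\<in>{1..d}. int i) = (\<Sum>i\<in>p ` {1..d}. int i)" using permutes_image[OF assms] by simp
  also have "\<dots> = (\<Sum>i\<in>{1..d}. int (p i))"
    by (subst sum.reindex) (auto intro: permutes_inj_on[OF assms])
  finally show ?thesis by simp
qed

lemma footrule_pos:
  assumes "ranking d \<pi>" "ranking d \<rho>"
  shows "footrule d \<pi> \<rho> = 2 * (\<Sum>i\<in>{1..d}. (int (\<pi> i) - int (\<rho> i)) * (if \<rho> i < \<pi> i then 1 else 0))"
proof -
  have e: "(\<Sum>i\<in>{1..d}. int (\<pi> i) - int (\<rho> i)) = 0"
    using perm_sum_eq[of \<pi> d] perm_sum_eq[of \<rho> d] assms
    by (simp add: ranking_def sum_subtractf)
  have "footrule d \<pi> \<rho> = (\<Sum>i\<in>{1..d}. 2 * ((int (\<pi> i) - int (\<rho> i)) * (if \<rho> i < \<pi> i then 1 else 0)) - (int (\<pi> i) - int (\<rho> i)))"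
    unfolding footrule_def by (rule sum.cong) auto
  also have "\<dots> = 2 * (\<Sum>i\<in>{1..d}. (int (\<pi> i) - int (\<rho> i)) * (if \<rho> i < \<pi> i then 1 else 0))"
    using e by (simp add: sum_subtractf sum_distrib_left)
  finally show ?thesis .
qed

lemma Obj_ObjL:
  assumes "\<forall>\<pi>\<in>S. ranking d \<pi>" "ranking d \<rho>"
  shows "Obj d S \<rho> = ObjL S {1..d} \<rho>"
  unfolding Obj_def ObjL_def sum_distrib_left
  using footrule_pos assms by (intro sum.cong) (auto simp: sum_distrib_left)

lemma ObjL_union:
  assumes "finite A" "finite B" "A \<inter> B = {}"
  shows "ObjL S (A \<union> B) \<rho> = ObjL S A \<rho> + ObjL S B \<rho>"
  unfolding ObjL_def using assms
  by (simp add: sum.union_disjoint sum.distrib distrib_left)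

lemma ObjL_cong:
  assumes "\<forall>a\<in>A. \<rho> a = \<tau> a"
  shows "ObjL S A \<rho> = ObjL S A \<tau>"
  unfolding ObjL_def using assms by (intro arg_cong[where f="\<lambda>x. 2 * x"] sum.cong refl) auto

lemma ObjL_mono:
  assumes "A \<subseteq> {1..d}" "\<forall>a\<in>A. \<sigma> a \<le> \<rho> a"
  shows "ObjL S A \<rho> \<le> ObjL S {1..d} \<sigma>"
  unfolding ObjL_def
proof -
  have "(\<Sum>\<pi>\<in>S. \<Sum>i\<in>A. (int (\<pi> i) - int (\<rho> i)) * (if \<rho> i < \<pi> i then 1 else 0))
     \<le> (\<Sum>\<pi>\<in>S. \<Sum>i\<in>{1..d}. (int (\<pi> i) - int (\<sigma> i)) * (if \<sigma> i < \<pi> i then 1 else 0))"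
  proof (rule sum_mono)
    fix \<pi> assume "\<pi> \<in> S"
    have "(\<Sum>i\<in>A. (int (\<pi> i) - int (\<rho> i)) * (if \<rho> i < \<pi> i then 1 else 0))
        \<le> (\<Sum>i\<in>A. (int (\<pi> i) - int (\<sigma> i)) * (if \<sigma> i < \<pi> i then 1 else 0))"
      using assms(2) by (intro sum_mono) auto
    also have "\<dots> \<le> (\<Sum>i\<in>{1..d}. (int (\<pi> i) - int (\<sigma> i)) * (if \<sigma> i < \<pi> i then 1 else 0))"
      using assms(1) by (intro sum_mono2) auto
    finally show "(\<Sum>i\<in>A. (int (\<pi> i) - int (\<rho> i)) * (if \<rho> i < \<pi> i then 1 else 0))
        \<le> (\<Sum>i\<in>{1..d}. (int (\<pi> i) - int (\<sigma> i)) * (if \<sigma> i < \<pi> i then 1 else 0))" .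
  qed
  then show "2 * (\<Sum>\<pi>\<in>S. \<Sum>i\<in>A. (int (\<pi> i) - int (\<rho> i)) * (if \<rho> i < \<pi> i then 1 else 0))
     \<le> 2 * (\<Sum>\<pi>\<in>S. \<Sum>i\<in>{1..d}. (int (\<pi> i) - int (\<sigma> i)) * (if \<sigma> i < \<pi> i then 1 else 0))" by simp
qed

theorem lemma4p4:
  fixes d g k :: nat and S :: "(nat \<Rightarrow> nat) set" and G :: "nat \<Rightarrow> nat set"
    and \<alpha> \<beta> :: "nat \<Rightarrow> real" and D :: "nat set" and \<tau> \<sigma> \<sigma>s :: "nat \<Rightarrow> nat"
  assumes S_rank: "\<forall>\<pi>\<in>S. ranking d \<pi>" and S_ne: "S \<noteq> {}"
    and part: "is_partition d g G"
    and \<alpha>_range: "\<forall>i\<in>{1..g}. 0 \<le> \<alpha> i \<and> \<alpha> i \<le> 1"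
    and \<beta>_range: "\<forall>i\<in>{1..g}. 0 \<le> \<beta> i \<and> \<beta> i \<le> 1"
    and k_range: "1 \<le> k" "k \<le> d"
    and fair_exists: "\<exists>\<rho>. ranking d \<rho> \<and> fair_full g G \<alpha> \<beta> k \<rho>"
    and \<tau>_topk: "topk_ranking d k D \<tau>" and \<tau>_fair: "fair_topk g G \<alpha> \<beta> k D \<tau>"
    and \<tau>_min: "\<forall>D' \<tau>'. topk_ranking d k D' \<tau>' \<and> fair_topk g G \<alpha> \<beta> k D' \<tau>'
                    \<longrightarrow> ObjL S D \<tau> \<le> ObjL S D' \<tau>'"
    and \<sigma>_rank: "ranking d \<sigma>" and \<sigma>_ext: "\<forall>a\<in>D. \<sigma> a = \<tau> a"
    and \<sigma>_min: "\<forall>\<rho>. ranking d \<rho> \<and> (\<forall>a\<in>D. \<rho> a = \<tau> a)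
                    \<longrightarrow> ObjL S {1..d} \<sigma> \<le> ObjL S {1..d} \<rho>"
    and \<sigma>s_rank: "ranking d \<sigma>s" and \<sigma>s_fair: "fair_full g G \<alpha> \<beta> k \<sigma>s"
    and \<sigma>s_min: "\<forall>\<rho>. ranking d \<rho> \<and> fair_full g G \<alpha> \<beta> k \<rho> \<longrightarrow> Obj d S \<sigma>s \<le> Obj d S \<rho>"
  shows "Obj d S \<sigma> \<le> ObjL S {a \<in> {1..d}. \<sigma>s a \<le> k} \<sigma>s + Obj d S \<sigma>s"
proof -
  define L where "L = {a \<in> {1..d}. \<sigma>s a \<le> k}"
  define A where "A = {1..d} - D"
  have sp: "\<sigma>s permutes {1..d}" using \<sigma>s_rank by (simp add: ranking_def)
  have Dsub: "D \<subseteq> {1..d}" and tb: "bij_betw \<tau> D {1..k}" using \<tau>_topk by (auto simp: topk_ranking_def)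
  have cD: "card D = k" using bij_betw_same_card[OF tb] by simp
  have sge: "\<sigma>s x \<ge> 1 \<and> \<sigma>s x \<le> d" if "x \<in> {1..d}" for x
    using permutes_image[OF sp] that by force
  have Lb: "bij_betw \<sigma>s L {1..k}"
    unfolding bij_betw_def
  proof
    show "inj_on \<sigma>s L" using permutes_inj_on[OF sp] .
    show "\<sigma>s ` L = {1..k}"
    proof
      show "\<sigma>s ` L \<subseteq> {1..k}" using sge by (auto simp: L_def)
      show "{1..k} \<subseteq> \<sigma>s ` L"
      proof
        fix y assume y: "y \<in> {1..k}"
        then have "y \<in> \<sigma>s ` {1..d}" using permutes_image[OF sp] k_range by auto
        then obtain x where "x \<in> {1..d}" "y = \<sigma>s x" by auto
        then show "y \<in> \<sigma>s ` L" using y by (auto simp: L_def)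
      qed
    qed
  qed
  have cL: "card L = k" using bij_betw_same_card[OF Lb] by simp
  have Lsub: "L \<subseteq> {1..d}" by (auto simp: L_def)
  have fin: "finite L" "finite D" using Lsub Dsub finite_subset by auto
  have "card (L - D) = card (D - L)"
    using card_Diff_subset_Int[of L D] card_Diff_subset_Int[of D L] fin cL cD
    by (simp add: Int_commute)
  then obtain f where f: "bij_betw f (L - D) (D - L)"
    using finite_same_card_bij fin by (meson finite_Diff)
  define h where "h x = (if x \<in> L then f x else x)" for x
  have hb: "bij_betw h A ({1..d} - L)"
  proof -
    have 1: "bij_betw h (L - D) (D - L)"
      using f by (rule bij_betw_cong[THEN iffD1, rotated]) (auto simp: h_def)
    have 2: "bij_betw h (A - L) (A - L)"
      by (rule bij_betw_cong[THEN iffD1, of _ id]) (auto simp: h_def)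
    have "bij_betw h ((L - D) \<union> (A - L)) ((D - L) \<union> (A - L))"
      by (rule bij_betw_combine[OF 1 2]) (auto simp: A_def)
    moreover have "(L - D) \<union> (A - L) = A" "(D - L) \<union> (A - L) = {1..d} - L"
      using Lsub Dsub by (auto simp: A_def)
    ultimately show ?thesis by simp
  qed
  have sc: "bij_betw \<sigma>s ({1..d} - L) {k+1..d}"
  proof -
    have "bij_betw \<sigma>s {1..d} {1..d}" using permutes_imp_bij[OF sp] .
    have "\<sigma>s ` ({1..d} - L) = \<sigma>s ` {1..d} - \<sigma>s ` L"
      by (rule image_set_diff[OF permutes_inj[OF sp]])
    also have "\<dots> = {1..d} - {1..k}" using permutes_image[OF sp] Lb by (simp add: bij_betw_def)
    finally have "bij_betw \<sigma>s ({1..d} - L) ({1..d} - {1..k})"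
      unfolding bij_betw_def using permutes_inj_on[OF sp] by blast
    moreover have "{1..d} - {1..k} = {k+1..d}" by auto
    ultimately show ?thesis by simp
  qed
  define \<rho> where "\<rho> x = (if x \<in> D then \<tau> x else if x \<in> {1..d} then \<sigma>s (h x) else x)" for x
  have \<rho>A: "bij_betw \<rho> A {k+1..d}"
  proof -
    have "bij_betw (\<sigma>s \<circ> h) A {k+1..d}" using bij_betw_trans[OF hb sc] .
    then show ?thesis by (rule bij_betw_cong[THEN iffD1, rotated]) (auto simp: \<rho>_def A_def)
  qed
  have \<rho>D: "bij_betw \<rho> D {1..k}"
    using tb by (rule bij_betw_cong[THEN iffD1, rotated]) (auto simp: \<rho>_def)
  have "bij_betw \<rho> (D \<union> A) ({1..k} \<union> {k+1..d})"
    by (rule bij_betw_combine[OF \<rho>D \<rho>A]) auto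
  moreover have "D \<union> A = {1..d}" "{1..k} \<union> {k+1..d} = {1..d}" using Dsub k_range by (auto simp: A_def)
  ultimately have "bij_betw \<rho> {1..d} {1..d}" by simp
  then have \<rho>_rank: "ranking d \<rho>" unfolding ranking_def
  proof (rule bij_imp_permutes)
    fix x assume "x \<notin> {1..d}"
    then have "x \<notin> D" using Dsub by blast
    then show "\<rho> x = x" using \<open>x \<notin> {1..d}\<close> unfolding \<rho>_def by (simp only: if_False)
  qed
  have \<rho>_ext: "\<forall>a\<in>D. \<rho> a = \<tau> a" by (simp add: \<rho>_def)
  have \<rho>_ge: "\<forall>a\<in>A. \<sigma>s a \<le> \<rho> a"
  proof
    fix a assume a: "a \<in> A"
    then have ad: "a \<notin> D" "a \<in> {1..d}" by (auto simp: A_def)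
    have "\<rho> a \<in> {k+1..d}" using \<rho>A a by (auto simp: bij_betw_def)
    show "\<sigma>s a \<le> \<rho> a"
    proof (cases "a \<in> L")
      case True then show ?thesis using \<open>\<rho> a \<in> {k+1..d}\<close> by (auto simp: L_def)
    next
      case False then show ?thesis using ad by (simp add: \<rho>_def h_def)
    qed
  qed
  have Lfair: "topk_ranking d k L \<sigma>s \<and> fair_topk g G \<alpha> \<beta> k L \<sigma>s"
  proof
    show "topk_ranking d k L \<sigma>s" using Lsub Lb by (simp add: topk_ranking_def)
    have Gs: "G i \<subseteq> {1..d}" if "i \<in> {1..g}" for i using part that by (auto simp: is_partition_def)
    have "{a \<in> G i \<inter> L. \<sigma>s a \<le> k} = {a \<in> G i. \<sigma>s a \<le> k}" if "i \<in> {1..g}" for i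
      using Gs[OF that] by (auto simp: L_def)
    then show "fair_topk g G \<alpha> \<beta> k L \<sigma>s"
      using \<sigma>s_fair by (simp add: fair_topk_def fair_full_def)
  qed
  have fA: "finite A" by (simp add: A_def)
  have e1: "Obj d S \<sigma> = ObjL S {1..d} \<sigma>" by (rule Obj_ObjL[OF S_rank \<sigma>_rank])
  have e2: "ObjL S {1..d} \<sigma> \<le> ObjL S {1..d} \<rho>" using \<rho>_rank \<rho>_ext by (intro \<sigma>_min[rule_format] conjI)
  have e3: "ObjL S {1..d} \<rho> = ObjL S D \<rho> + ObjL S A \<rho>"
  proof -
    have "D \<inter> A = {}" by (auto simp: A_def)
    then have "ObjL S (D \<union> A) \<rho> = ObjL S D \<rho> + ObjL S A \<rho>" by (rule ObjL_union[OF fin(2) fA])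
    then show ?thesis using \<open>D \<union> A = {1..d}\<close> by simp
  qed
  have e4: "ObjL S D \<rho> = ObjL S D \<tau>" by (rule ObjL_cong[OF \<rho>_ext])
  have e5: "ObjL S D \<tau> \<le> ObjL S L \<sigma>s" using Lfair by (intro \<tau>_min[rule_format])
  have Asub: "A \<subseteq> {1..d}" by (auto simp: A_def)
  have e6: "ObjL S A \<rho> \<le> ObjL S {1..d} \<sigma>s" by (rule ObjL_mono[OF Asub \<rho>_ge])
  have e7: "ObjL S {1..d} \<sigma>s = Obj d S \<sigma>s" by (rule Obj_ObjL[OF S_rank \<sigma>s_rank, symmetric])
  have "Obj d S \<sigma> \<le> ObjL S L \<sigma>s + Obj d S \<sigma>s" using e1 e2 e3 e4 e5 e6 e7 by linarith
  then show ?thesis by (simp add: L_def)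
qed

end
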